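(* Let $\mu$ be a nonatomic positive Radon measure on $\mathbb{R}$ and $g\in\Lambda_\mu$. Then there is a constant $C$ such that for every triple $a<x<b$, \[|g(x)-g(a)|+|g(x)-g(b)|\le|g(a)-g(b)|+C\mu([a,b]),\] and for every bounded interval $[a,b]$ there is $C'$ such that $\sum_{j=1}^N|g(x_j)-g(x_{j-1})|\le C'\log(N+1)$ for every partition $a=x_0<\dots<x_N=b$.
   Context: For a nonatomic positive Radon measure $\mu$ on $\mathbb{R}$, $\Lambda_\mu$ is the class of continuous $g\colon\mathbb{R}\to\mathbb{R}$ for which there is $M>0$ with $|g(x+h)-2g(x)+g(x-h)|\le M\mu([x-h,x+h])$ for all $x\in\mathbb{R}$, $h\ge0$. *)

theory Defs
  imports "HOL-Analysis.Analysis"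
begin

text \<open>A positive Radon measure on the real line: a Borel measure that is finite on
  compact sets (on \<real> every locally finite Borel measure is regular).  Nonatomic:
  every singleton has measure zero.\<close>
definition nonatomic_radon_real :: "real measure \<Rightarrow> bool" where
  "nonatomic_radon_real \<mu> \<longleftrightarrow>
     sets \<mu> = sets borel \<and>
     (\<forall>K. compact K \<longrightarrow> emeasure \<mu> K < \<infinity>) \<and>
     (\<forall>x. emeasure \<mu> {x} = 0)"

definition Lambda_class :: "real measure \<Rightarrow> (real \<Rightarrow> real) set" where
  "Lambda_class \<mu> = {g. continuous_on UNIV g \<and>
     (\<exists>M>0. \<forall>x h. h \<ge> 0 \<longrightarrow>
        \<bar>g (x + h) - 2 * g x + g (x - h)\<bar> \<le> M * measure \<mu> {x - h..x + h})}"

end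

theory Submission
  imports Defs
begin

lemma nu_fmeas:
  assumes "nonatomic_radon_real \<mu>"
  shows "{a..b} \<in> fmeasurable \<mu>"
  using assms unfolding nonatomic_radon_real_def fmeasurable_def
  by auto

lemma nu_mono:
  assumes "nonatomic_radon_real \<mu>" "a \<le> c" "d \<le> b"
  shows "measure \<mu> {c..d} \<le> measure \<mu> {a..b}"
proof (rule measure_mono_fmeasurable)
  show "{c..d} \<subseteq> {a..b}" using assms by auto
  show "{c..d} \<in> sets \<mu>" using assms unfolding nonatomic_radon_real_def by auto
  show "{a..b} \<in> fmeasurable \<mu>" by (rule nu_fmeas[OF assms(1)])
qed

lemma nu_add:
  assumes "nonatomic_radon_real \<mu>" "a \<le> c" "c \<le> b"
  shows "measure \<mu> {a..c} + measure \<mu> {c..b} \<le> measure \<mu> {a..b}"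
proof -
  have u: "{a..b} = {a..c} \<union> {c..b}" using assms by auto
  have i: "{a..c} \<inter> {c..b} = {c}" using assms by auto
  have z: "measure \<mu> {c} = 0" using assms(1) unfolding nonatomic_radon_real_def measure_def by simp
  show ?thesis
    using measure_Un3[OF nu_fmeas[OF assms(1)] nu_fmeas[OF assms(1)], of a c c b]
    unfolding u[symmetric] i z by simp
qed

lemma part1_one:
  fixes g :: "real \<Rightarrow> real"
  assumes mu: "nonatomic_radon_real \<mu>" and cont: "continuous_on UNIV g"
    and M: "\<forall>x h. h \<ge> 0 \<longrightarrow> \<bar>g (x + h) - 2 * g x + g (x - h)\<bar> \<le> M * measure \<mu> {x - h..x + h}"
    and Mpos: "M > 0"
    and ax: "a \<le> x" and xb: "x \<le> b"
  shows "g x - max (g a) (g b) \<le> M * measure \<mu> {a..b}"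
proof -
  obtain m where m: "m \<in> {a..b}" and mx: "\<forall>y\<in>{a..b}. g y \<le> g m"
    using continuous_attains_sup[of "{a..b}" g] ax xb continuous_on_subset[OF cont]
    by (metis atLeastAtMost_iff compact_Icc empty_iff order_trans subset_UNIV)
  have gx: "g x \<le> g m" using mx ax xb by auto
  show ?thesis
  proof (cases "m - a \<le> b - m")
    case True
    define h where "h = m - a"
    have h0: "h \<ge> 0" using m h_def by auto
    have "\<bar>g (m + h) - 2 * g m + g (m - h)\<bar> \<le> M * measure \<mu> {m - h..m + h}"
      using M h0 by blast
    moreover have "g (m + h) \<le> g m" using mx True m h_def by auto
    moreover have "m - h = a" using h_def by simp
    moreover have "measure \<mu> {m - h..m + h} \<le> measure \<mu> {a..b}"
      using nu_mono[OF mu] True h_def by auto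
    ultimately have "g m - g a \<le> M * measure \<mu> {a..b}"
      using Mpos mult_left_mono[of "measure \<mu> {m - h..m + h}" "measure \<mu> {a..b}" M]
      by (smt (verit))
    then show ?thesis using gx by linarith
  next
    case False
    define h where "h = b - m"
    have h0: "h \<ge> 0" using m h_def by auto
    have "\<bar>g (m + h) - 2 * g m + g (m - h)\<bar> \<le> M * measure \<mu> {m - h..m + h}"
      using M h0 by blast
    moreover have "g (m - h) \<le> g m" using mx False m h_def by auto
    moreover have "m + h = b" using h_def by simp
    moreover have "measure \<mu> {m - h..m + h} \<le> measure \<mu> {a..b}"
      using nu_mono[OF mu] False h_def by auto
    ultimately have "g m - g b \<le> M * measure \<mu> {a..b}"
      using Mpos mult_left_mono[of "measure \<mu> {m - h..m + h}" "measure \<mu> {a..b}" M]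
      by (smt (verit))
    then show ?thesis using gx by linarith
  qed
qed

lemma part1:
  fixes g :: "real \<Rightarrow> real"
  assumes mu: "nonatomic_radon_real \<mu>" and cont: "continuous_on UNIV g"
    and M: "\<forall>x h. h \<ge> 0 \<longrightarrow> \<bar>g (x + h) - 2 * g x + g (x - h)\<bar> \<le> M * measure \<mu> {x - h..x + h}"
    and Mpos: "M > 0"
    and ax: "a \<le> x" and xb: "x \<le> b"
  shows "\<bar>g x - g a\<bar> + \<bar>g x - g b\<bar> \<le> \<bar>g a - g b\<bar> + (2 * M) * measure \<mu> {a..b}"
proof -
  have 1: "g x - max (g a) (g b) \<le> M * measure \<mu> {a..b}"
    by (rule part1_one[OF mu cont M Mpos ax xb])
  have cont': "continuous_on UNIV (\<lambda>t. - g t)" using cont by (intro continuous_intros)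
  have M': "\<forall>x h. h \<ge> 0 \<longrightarrow> \<bar>(- g (x + h)) - 2 * (- g x) + (- g (x - h))\<bar> \<le> M * measure \<mu> {x - h..x + h}"
  proof (intro allI impI)
    fix x h :: real assume "h \<ge> 0"
    then have "\<bar>g (x + h) - 2 * g x + g (x - h)\<bar> \<le> M * measure \<mu> {x - h..x + h}" using M by blast
    then show "\<bar>(- g (x + h)) - 2 * (- g x) + (- g (x - h))\<bar> \<le> M * measure \<mu> {x - h..x + h}"
      by (smt (verit))
  qed
  have 2: "(- g x) - max (- g a) (- g b) \<le> M * measure \<mu> {a..b}"
    by (rule part1_one[OF mu cont' M' Mpos ax xb])
  have "measure \<mu> {a..b} \<ge> 0" by simp
  then have 3: "M * measure \<mu> {a..b} \<ge> 0" using Mpos by simp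
  have eq: "(2 * M) * measure \<mu> {a..b} = 2 * (M * measure \<mu> {a..b})" by simp
  show ?thesis unfolding eq using 1 2 3 by (auto simp: abs_if max_def split: if_splits)
qed

definition SV :: "(real \<Rightarrow> real) \<Rightarrow> (nat \<Rightarrow> real) \<Rightarrow> nat \<Rightarrow> real" where
  "SV g xs N = (\<Sum>j=1..N. \<bar>g (xs j) - g (xs (j - 1))\<bar>)"

lemma SV_0[simp]: "SV g xs 0 = 0" by (simp add: SV_def)
lemma SV_Suc: "SV g xs (Suc n) = SV g xs n + \<bar>g (xs (Suc n)) - g (xs n)\<bar>"
  by (simp add: SV_def)

lemma halve:
  fixes g :: "real \<Rightarrow> real"
  assumes mu: "nonatomic_radon_real \<mu>"
    and P1: "\<And>a x b. a \<le> x \<Longrightarrow> x \<le> b \<Longrightarrow>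
       \<bar>g x - g a\<bar> + \<bar>g x - g b\<bar> \<le> \<bar>g a - g b\<bar> + C * measure \<mu> {a..b}"
    and C0: "C \<ge> 0"
    and mono: "\<forall>j. xs j \<le> xs (Suc j)"
  shows "SV g xs (2 * m) \<le> SV g (\<lambda>i. xs (2 * i)) m + C * measure \<mu> {xs 0..xs (2 * m)}"
proof (induction m)
  case 0
  then show ?case using C0 by simp
next
  case (Suc m)
  let ?a = "xs (2*m)" and ?x = "xs (Suc (2*m))" and ?b = "xs (Suc (Suc (2*m)))"
  have e: "2 * Suc m = Suc (Suc (2*m))" by simp
  have le1: "?a \<le> ?x" and le2: "?x \<le> ?b" using mono by auto
  have mon: "mono xs" using mono by (simp add: mono_iff_le_Suc)
  have le0: "xs 0 \<le> ?a" using mon by (simp add: monoD)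
  have "SV g xs (2 * Suc m) = SV g xs (2*m) + \<bar>g ?x - g ?a\<bar> + \<bar>g ?b - g ?x\<bar>"
    unfolding e SV_Suc by simp
  also have "\<dots> \<le> SV g (\<lambda>i. xs (2 * i)) m + C * measure \<mu> {xs 0..?a}
      + \<bar>g ?a - g ?b\<bar> + C * measure \<mu> {?a..?b}"
    using Suc.IH P1[OF le1 le2] by (smt (verit))
  also have "\<dots> \<le> SV g (\<lambda>i. xs (2 * i)) (Suc m) + C * measure \<mu> {xs 0..?b}"
  proof -
    have "measure \<mu> {xs 0..?a} + measure \<mu> {?a..?b} \<le> measure \<mu> {xs 0..?b}"
      using nu_add[OF mu le0] le1 le2 by simp
    then have "C * measure \<mu> {xs 0..?a} + C * measure \<mu> {?a..?b} \<le> C * measure \<mu> {xs 0..?b}"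
      using C0 by (metis distrib_left mult_left_mono)
    moreover have "SV g (\<lambda>i. xs (2 * i)) (Suc m) = SV g (\<lambda>i. xs (2 * i)) m + \<bar>g ?b - g ?a\<bar>"
      using SV_Suc[of g "\<lambda>i. xs (2 * i)" m] e by simp
    ultimately show ?thesis by (smt (verit))
  qed
  finally show ?case using e by simp
qed

lemma levels:
  fixes g :: "real \<Rightarrow> real"
  assumes mu: "nonatomic_radon_real \<mu>"
    and P1: "\<And>a x b. a \<le> x \<Longrightarrow> x \<le> b \<Longrightarrow>
       \<bar>g x - g a\<bar> + \<bar>g x - g b\<bar> \<le> \<bar>g a - g b\<bar> + C * measure \<mu> {a..b}"
    and C0: "C \<ge> 0"
    and D: "\<And>u v. u \<in> {a..b} \<Longrightarrow> v \<in> {a..b} \<Longrightarrow> \<bar>g u - g v\<bar> \<le> D"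
  shows "\<forall>xs. (\<forall>j. xs j \<le> xs (Suc j)) \<and> (\<forall>j. a \<le> xs j \<and> xs j \<le> b) \<longrightarrow>
          SV g xs (2^n) \<le> D + real n * (C * measure \<mu> {a..b})"
proof (induction n)
  case 0
  show ?case
  proof (intro allI impI)
    fix xs :: "nat \<Rightarrow> real" assume "(\<forall>j. xs j \<le> xs (Suc j)) \<and> (\<forall>j. a \<le> xs j \<and> xs j \<le> b)"
    then have "\<bar>g (xs 1) - g (xs 0)\<bar> \<le> D" using D by auto
    then show "SV g xs (2^0) \<le> D + real 0 * (C * measure \<mu> {a..b})"
      by (simp add: SV_def)
  qed
next
  case (Suc n)
  show ?case
  proof (intro allI impI)
    fix xs :: "nat \<Rightarrow> real" assume H: "(\<forall>j. xs j \<le> xs (Suc j)) \<and> (\<forall>j. a \<le> xs j \<and> xs j \<le> b)"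
    have "SV g xs (2 * 2^n) \<le> SV g (\<lambda>i. xs (2 * i)) (2^n) + C * measure \<mu> {xs 0..xs (2 * 2^n)}"
      using halve[OF mu P1 C0] H by blast
    moreover have "SV g (\<lambda>i. xs (2 * i)) (2^n) \<le> D + real n * (C * measure \<mu> {a..b})"
    proof -
      have "\<forall>j. xs (2*j) \<le> xs (2 * Suc j)"
      proof
        fix j
        have "xs (2*j) \<le> xs (Suc (2*j))" "xs (Suc (2*j)) \<le> xs (Suc (Suc (2*j)))" using H by auto
        then show "xs (2*j) \<le> xs (2 * Suc j)" by simp
      qed
      then show ?thesis using Suc.IH H by auto
    qed
    moreover have "C * measure \<mu> {xs 0..xs (2 * 2^n)} \<le> C * measure \<mu> {a..b}"
      using nu_mono[OF mu] H C0 by (simp add: mult_left_mono)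
    ultimately show "SV g xs (2^Suc n) \<le> D + real (Suc n) * (C * measure \<mu> {a..b})"
      by (simp add: algebra_simps)
  qed
qed

theorem mainTheorem11:
  fixes \<mu> :: "real measure" and g :: "real \<Rightarrow> real"
  assumes "nonatomic_radon_real \<mu>"
    and "g \<in> Lambda_class \<mu>"
  shows "(\<exists>C. \<forall>a x b. a < x \<and> x < b \<longrightarrow>
            \<bar>g x - g a\<bar> + \<bar>g x - g b\<bar> \<le> \<bar>g a - g b\<bar> + C * measure \<mu> {a..b})
       \<and> (\<forall>a b. \<exists>C'. \<forall>(N::nat) (xs::nat \<Rightarrow> real).
            xs 0 = a \<and> xs N = b \<and> (\<forall>j<N. xs j < xs (Suc j)) \<longrightarrow>
            (\<Sum>j=1..N. \<bar>g (xs j) - g (xs (j - 1))\<bar>) \<le> C' * ln (real N + 1))"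
proof -
  note mu = assms(1)
  have cont: "continuous_on UNIV g" using assms(2) unfolding Lambda_class_def by auto
  obtain M where Mpos: "M > 0" and M: "\<forall>x h. h \<ge> 0 \<longrightarrow> \<bar>g (x + h) - 2 * g x + g (x - h)\<bar> \<le> M * measure \<mu> {x - h..x + h}"
    using assms(2) unfolding Lambda_class_def by auto
  define C where "C = 2 * M"
  have C0: "C \<ge> 0" using Mpos C_def by simp
  have P1: "\<And>a x b. a \<le> x \<Longrightarrow> x \<le> b \<Longrightarrow>
       \<bar>g x - g a\<bar> + \<bar>g x - g b\<bar> \<le> \<bar>g a - g b\<bar> + C * measure \<mu> {a..b}"
    unfolding C_def by (rule part1[OF mu cont M Mpos])
  show ?thesis
  proof
    show "\<exists>C. \<forall>a x b. a < x \<and> x < b \<longrightarrow>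
            \<bar>g x - g a\<bar> + \<bar>g x - g b\<bar> \<le> \<bar>g a - g b\<bar> + C * measure \<mu> {a..b}"
      using P1 by (meson less_imp_le)
  next
    show "\<forall>a b. \<exists>C'. \<forall>(N::nat) (xs::nat \<Rightarrow> real).
            xs 0 = a \<and> xs N = b \<and> (\<forall>j<N. xs j < xs (Suc j)) \<longrightarrow>
            (\<Sum>j=1..N. \<bar>g (xs j) - g (xs (j - 1))\<bar>) \<le> C' * ln (real N + 1)"
    proof (intro allI)
      fix a b :: real
      have "bounded (g ` {a..b})"
        using compact_continuous_image[OF continuous_on_subset[OF cont] compact_Icc]
        by (simp add: compact_imp_bounded)
      then obtain B where B: "\<forall>y\<in>g ` {a..b}. norm y \<le> B" by (auto simp: bounded_iff)
      define D where "D = 2 * max B 0"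
      have D0: "D \<ge> 0" using D_def by simp
      have D: "\<And>u v. u \<in> {a..b} \<Longrightarrow> v \<in> {a..b} \<Longrightarrow> \<bar>g u - g v\<bar> \<le> D"
      proof -
        fix u v assume "u \<in> {a..b}" "v \<in> {a..b}"
        then have "\<bar>g u\<bar> \<le> B" "\<bar>g v\<bar> \<le> B" using B by auto
        then show "\<bar>g u - g v\<bar> \<le> D" unfolding D_def by linarith
      qed
      define K where "K = C * measure \<mu> {a..b}"
      have K0: "K \<ge> 0" using C0 K_def by simp
      note L = levels[OF mu P1 C0 D]
      show "\<exists>C'. \<forall>(N::nat) (xs::nat \<Rightarrow> real).
            xs 0 = a \<and> xs N = b \<and> (\<forall>j<N. xs j < xs (Suc j)) \<longrightarrow>
            (\<Sum>j=1..N. \<bar>g (xs j) - g (xs (j - 1))\<bar>) \<le> C' * ln (real N + 1)"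
      proof (intro exI allI impI)
        fix N :: nat and xs :: "nat \<Rightarrow> real"
        assume H: "xs 0 = a \<and> xs N = b \<and> (\<forall>j<N. xs j < xs (Suc j))"
        show "(\<Sum>j=1..N. \<bar>g (xs j) - g (xs (j - 1))\<bar>) \<le> (D + 2 * K) / ln 2 * ln (real N + 1)"
        proof (cases "N = 0")
          case True then show ?thesis by simp
        next
          case False
          define ys where "ys j = xs (min j N)" for j
          have ysS: "\<forall>j. ys j \<le> ys (Suc j)"
          proof
            fix j show "ys j \<le> ys (Suc j)"
              using H unfolding ys_def
              by (cases "j < N") (auto simp: min_def less_imp_le)
          qed
          have ymono: "mono ys" using ysS by (simp add: mono_iff_le_Suc)
          have yab: "\<forall>j. a \<le> ys j \<and> ys j \<le> b"
          proof
            fix j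
            have "ys 0 \<le> ys j" "ys j \<le> ys (max j N)" using ymono by (auto simp: monoD)
            moreover have "ys 0 = a" "ys (max j N) = b" using H unfolding ys_def by auto
            ultimately show "a \<le> ys j \<and> ys j \<le> b" by simp
          qed
          have eq1: "(\<Sum>j=1..N. \<bar>g (xs j) - g (xs (j - 1))\<bar>) = SV g ys N"
            unfolding SV_def ys_def by (intro sum.cong) auto
          have eq2: "SV g ys K' = SV g ys N" if "N \<le> K'" for K'
            using that
          proof (induction K' rule: dec_induct)
            case base then show ?case by simp
          next
            case (step k)
            then have "ys (Suc k) = ys k" unfolding ys_def by auto
            then show ?case using step SV_Suc[of g ys k] by simp
          qed
          obtain n where n1: "2^n \<le> N" and n2: "N < 2^(n+1)"
            using ex_power_ivl1[of 2 N] False by auto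
          have "SV g ys (2^(n+1)) \<le> D + real (n+1) * K"
            using L ysS yab unfolding K_def by blast
          then have S: "(\<Sum>j=1..N. \<bar>g (xs j) - g (xs (j - 1))\<bar>) \<le> D + real (n+1) * K"
            using eq1 eq2[of "2^(n+1)"] n2 by simp
          define Lg where "Lg = log 2 (real N + 1)"
          have "real n = log 2 (2^n)" by simp
          also have "\<dots> \<le> log 2 (real N + 1)"
          proof -
            have "real (2^n) \<le> real N" using n1 by (simp only: of_nat_le_iff)
            moreover have "real (2^n) = (2::real)^n" by simp
            ultimately have "(2::real)^n \<le> real N + 1" by linarith
            then show ?thesis by (subst log_le_cancel_iff) (auto simp del: log_pow_cancel)
          qed
          finally have nL: "real n \<le> Lg" unfolding Lg_def .
          have L1: "1 \<le> Lg" unfolding Lg_def using False by simp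
          have "D + real (n+1) * K \<le> D * Lg + 2 * K * Lg"
          proof -
            have a1: "D * 1 \<le> D * Lg" using L1 D0 by (rule mult_left_mono)
            have "real (n+1) \<le> 2 * Lg" using nL L1 by simp
            then have a2: "real (n+1) * K \<le> (2 * Lg) * K" using K0 by (rule mult_right_mono)
            show ?thesis using a1 a2 by (simp add: algebra_simps)
          qed
          also have "\<dots> = (D + 2 * K) / ln 2 * ln (real N + 1)"
            unfolding Lg_def log_def by (simp add: field_simps)
          finally show ?thesis using S by linarith
        qed
      qed
    qed
  qed
qed

end
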